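(* Let $E$ be a uniformly convex Banach space. There exists $q_0<1$ such that for all continuous isometric linear representations $\pi:H_3(\mathbb{R})\to\mathrm{O}(E)$, all $a,c\in\mathbb{R}$ and all $\xi\in E$, \[\|\pi(X(\gamma_a)Y(\gamma_c))\xi\|\le\max\big(q_0\|\xi\|,\;2\|\pi(Z(\gamma_{a+c}))\xi\|\big).\]
   Context: $H_3(\mathbb{R})$ is the simply connected Lie group whose Lie algebra has basis $\mathfrak{X},\mathfrak{Y},\mathfrak{Z}$ with $[\mathfrak{X},\mathfrak{Y}]=\mathfrak{Z}$, $[\mathfrak{X},\mathfrak{Z}]=[\mathfrak{Y},\mathfrak{Z}]=0$; $X(t)=\exp(t\mathfrak{X})$, $Y(t)=\exp(t\mathfrak{Y})$, $Z(t)=\exp(t\mathfrak{Z})$. $\gamma_a$ is the centered Gaussian on $\mathbb{R}$ with variance $e^{2a}$; $L(\gamma_a)$ denotes its pushforward under a one-parameter subgroup $L$, products of measures are convolutions, and $\pi(\mu)=\int\pi(g)\,d\mu(g)$. *)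

theory Defs
  imports "HOL-Probability.Probability"
begin

text \<open>The Heisenberg group H_3(R), realised as upper unitriangular matrices
  [[1,x,z],[0,1,y],[0,0,1]] encoded by the triple (x,y,z).\<close>

type_synonym heis = "real \<times> real \<times> real"

definition hmul :: "heis \<Rightarrow> heis \<Rightarrow> heis" where
  "hmul g h = (case g of (x, y, z) \<Rightarrow> case h of (x', y', z') \<Rightarrow>
      (x + x', y + y', z + z' + x * y'))"

definition hone :: heis where "hone = (0, 0, 0)"

definition Xg :: "real \<Rightarrow> heis" where "Xg t = (t, 0, 0)"
definition Yg :: "real \<Rightarrow> heis" where "Yg t = (0, t, 0)"
definition Zg :: "real \<Rightarrow> heis" where "Zg t = (0, 0, t)"

definition uniformly_convex :: "'a::real_normed_vector set \<Rightarrow> bool" where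
  "uniformly_convex S \<longleftrightarrow>
     (\<forall>\<epsilon>>0. \<exists>\<delta>>0. \<forall>x\<in>S. \<forall>y\<in>S.
        norm x \<le> 1 \<longrightarrow> norm y \<le> 1 \<longrightarrow> norm (x - y) \<ge> \<epsilon> \<longrightarrow>
        norm ((1/2) *\<^sub>R (x + y)) \<le> 1 - \<delta>)"

text \<open>Continuous (strongly continuous) isometric linear representation of H_3(R)
  into the orthogonal group O(E) of surjective linear isometries of E.\<close>
definition heis_isometric_rep :: "(heis \<Rightarrow> 'a::real_normed_vector \<Rightarrow> 'a) \<Rightarrow> bool" where
  "heis_isometric_rep \<pi> \<longleftrightarrow>
     (\<forall>g. linear (\<pi> g)) \<and>
     (\<forall>g v. norm (\<pi> g v) = norm v) \<and>
     (\<forall>g. surj (\<pi> g)) \<and>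
     \<pi> hone = id \<and>
     (\<forall>g h. \<pi> (hmul g h) = \<pi> g \<circ> \<pi> h) \<and>
     (\<forall>v. continuous_on UNIV (\<lambda>g. \<pi> g v))"

text \<open>Centered Gaussian density with variance e^(2a), i.e. standard deviation e^a.\<close>
definition gauss :: "real \<Rightarrow> real \<Rightarrow> real" where
  "gauss a = normal_density 0 (exp a)"

text \<open>pi(X(gamma_a) Y(gamma_c)) xi = integral of pi(X(s) Y(t)) xi d gamma_a(s) d gamma_c(t)
  (vector-valued integral over R^2 of a continuous function against the product density).\<close>
definition piXY :: "(heis \<Rightarrow> 'a::real_normed_vector \<Rightarrow> 'a) \<Rightarrow> real \<Rightarrow> real \<Rightarrow> 'a \<Rightarrow> 'a" where
  "piXY \<pi> a c v = integral UNIV (\<lambda>(s::real, t::real).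
      (gauss a s * gauss c t) *\<^sub>R \<pi> (hmul (Xg s) (Yg t)) v)"

definition piZ :: "(heis \<Rightarrow> 'a::real_normed_vector \<Rightarrow> 'a) \<Rightarrow> real \<Rightarrow> 'a \<Rightarrow> 'a" where
  "piZ \<pi> b v = integral UNIV (\<lambda>u::real. gauss b u *\<^sub>R \<pi> (Zg u) v)"

end

theory Submission
  imports Defs
begin

definition kap :: real where "kap = exp (-2) / sqrt (2*pi)"

lemma kap_pos: "0 < kap" by (simp add: kap_def)

lemma gauss_eq: "gauss a x = exp (- (x ^ 2) / (2 * (exp a) ^ 2)) / (sqrt (2*pi) * exp a)"
  unfolding gauss_def normal_density_def
  by (simp add: real_sqrt_mult)

lemma gauss_pos: "0 < gauss a x"
  unfolding gauss_def by (rule normal_density_pos) simp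

lemma gauss_cont: "continuous_on UNIV (gauss a)"
  unfolding gauss_eq[abs_def] by (intro continuous_intros) auto

lemma gauss_borel[measurable]: "gauss a \<in> borel_measurable borel"
  unfolding gauss_def by simp

lemma gauss_nn: "(\<integral>\<^sup>+x. ennreal (gauss a x) \<partial>lborel) = 1"
proof -
  have "(\<integral>\<^sup>+x. ennreal (gauss a x) \<partial>lborel) = ennreal (\<integral>x. gauss a x \<partial>lborel)"
    unfolding gauss_def
    by (rule nn_integral_eq_integral) (auto intro!: integrable_normal_density)
  also have "(\<integral>x. gauss a x \<partial>lborel) = 1" unfolding gauss_def
    by (rule integral_normal_density) simp
  finally show ?thesis by simp
qed

lemma gauss_has_int: "(gauss a has_integral 1) UNIV"
  by (rule nn_integral_has_integral) (auto simp: gauss_nn less_imp_le[OF gauss_pos])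

lemma gauss_lower:
  assumes "\<bar>x\<bar> \<le> 2 * exp a"
  shows "kap / exp a \<le> gauss a x"
proof -
  have "x^2 \<le> (2 * exp a)^2" using assms
    by (metis abs_le_square_iff abs_of_pos exp_gt_zero mult_pos_pos zero_less_numeral)
  hence "x^2 / (2 * exp a ^ 2) \<le> 2" by (simp add: field_simps power_mult_distrib)
  hence "exp (-2) \<le> exp (- (x ^ 2) / (2 * (exp a) ^ 2))" by simp
  thus ?thesis unfolding gauss_eq kap_def
    by (simp add: divide_right_mono field_simps)
qed

lemma mass_lower:
  assumes "-2 * exp b \<le> lo" "lo + exp b \<le> 2 * exp b"
  shows "ennreal kap \<le> (\<integral>\<^sup>+x. indicator {lo..lo + exp b} x * ennreal (gauss b x) \<partial>lborel)"
proof -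
  have "(\<integral>\<^sup>+x. indicator {lo..lo + exp b} x * ennreal (kap / exp b) \<partial>lborel)
      \<le> (\<integral>\<^sup>+x. indicator {lo..lo + exp b} x * ennreal (gauss b x) \<partial>lborel)"
  proof (rule nn_integral_mono)
    fix x
    show "indicator {lo..lo + exp b} x * ennreal (kap / exp b) \<le> indicator {lo..lo + exp b} x * ennreal (gauss b x)"
    proof (cases "x \<in> {lo..lo + exp b}")
      case True
      hence "\<bar>x\<bar> \<le> 2 * exp b" using assms by auto
      thus ?thesis using True gauss_lower[of x b] by (simp add: ennreal_leI)
    qed simp
  qed
  moreover have "(\<integral>\<^sup>+x. indicator {lo..lo + exp b} x * ennreal (kap / exp b) \<partial>lborel) = ennreal kap"
    by (subst nn_integral_multc) (auto simp: ennreal_mult[symmetric] kap_pos less_imp_le)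
  ultimately show ?thesis by simp
qed

lemma avg_choose:
  fixes F :: "real \<Rightarrow> ennreal"
  assumes [measurable]: "F \<in> borel_measurable borel"
    and int: "(\<integral>\<^sup>+x. F x * ennreal (gauss b x) \<partial>lborel) \<le> ennreal A" and A: "0 < A"
    and lo: "-2 * exp b \<le> lo" "lo + exp b \<le> 2 * exp b"
  shows "\<exists>x\<in>{lo..lo + exp b}. F x \<le> ennreal (2 * A / kap)"
proof (rule ccontr)
  assume "\<not> ?thesis"
  hence gt: "\<And>x. x \<in> {lo..lo + exp b} \<Longrightarrow> ennreal (2 * A / kap) < F x" by force
  have "ennreal (2 * A / kap) * ennreal kap \<le> ennreal (2 * A / kap) * (\<integral>\<^sup>+x. indicator {lo..lo + exp b} x * ennreal (gauss b x) \<partial>lborel)"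
    using mass_lower[OF lo] by (rule mult_left_mono) simp
  also have "\<dots> = (\<integral>\<^sup>+x. ennreal (2 * A / kap) * (indicator {lo..lo + exp b} x * ennreal (gauss b x)) \<partial>lborel)"
    by (rule nn_integral_cmult[symmetric]) simp
  also have "\<dots> \<le> (\<integral>\<^sup>+x. F x * ennreal (gauss b x) \<partial>lborel)"
  proof (rule nn_integral_mono)
    fix x show "ennreal (2 * A / kap) * (indicator {lo..lo + exp b} x * ennreal (gauss b x)) \<le> F x * ennreal (gauss b x)"
    proof (cases "x \<in> {lo..lo + exp b}")
      case True
      hence "ennreal (2 * A / kap) \<le> F x" using gt[of x] by (simp add: less_imp_le)
      thus ?thesis using True by (simp add: mult_right_mono)
    qed simp
  qed
  also have "\<dots> \<le> ennreal A" by (rule int)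
  finally have "ennreal (2 * A) \<le> ennreal A"
    using kap_pos by (simp add: ennreal_mult[symmetric] A less_imp_le)
  thus False using A by simp
qed


lemma box_diff_bound:
  fixes f :: "'n::euclidean_space \<Rightarrow> 'b::banach"
  assumes cf: "continuous_on UNIV f" and cg: "continuous_on UNIV g"
    and le: "\<And>x. norm (f x) \<le> g x" and sub: "cbox p q \<subseteq> cbox a b"
  shows "norm (integral (cbox a b) f - integral (cbox p q) f) \<le> integral (cbox a b) g - integral (cbox p q) g"
proof -
  let ?K = "cbox p q"
  have fi: "f integrable_on cbox u v" for u v
    by (rule integrable_continuous) (rule continuous_on_subset[OF cf], simp)
  have gi: "g integrable_on cbox u v" for u v
    by (rule integrable_continuous) (rule continuous_on_subset[OF cg], simp)
  have int_eq: "?K \<inter> cbox a b = ?K" using sub by blast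
  have e1: "integral (cbox a b) (\<lambda>x. if x \<in> ?K then f x else 0) = integral ?K f"
    by (simp add: integral_restrict_Int int_eq)
  have i1: "(\<lambda>x. if x \<in> ?K then f x else 0) integrable_on cbox a b"
    by (simp add: integrable_restrict_Int int_eq fi)
  have e2: "integral (cbox a b) (\<lambda>x. if x \<in> ?K then g x else 0) = integral ?K g"
    by (simp add: integral_restrict_Int int_eq)
  have i2: "(\<lambda>x. if x \<in> ?K then g x else 0) integrable_on cbox a b"
    by (simp add: integrable_restrict_Int int_eq gi)
  have "integral (cbox a b) f - integral ?K f = integral (cbox a b) (\<lambda>x. f x - (if x \<in> ?K then f x else 0))"
    using integral_diff[OF fi i1] e1 by simp
  moreover have "integral (cbox a b) g - integral ?K g = integral (cbox a b) (\<lambda>x. g x - (if x \<in> ?K then g x else 0))"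
    using integral_diff[OF gi i2] e2 by simp
  moreover have "norm (integral (cbox a b) (\<lambda>x. f x - (if x \<in> ?K then f x else 0)))
      \<le> integral (cbox a b) (\<lambda>x. g x - (if x \<in> ?K then g x else 0))"
    by (rule integral_norm_bound_integral) (auto intro!: integrable_diff fi gi i1 i2 simp: le)
  ultimately show ?thesis by simp
qed

lemma bi:
  fixes f :: "'n::euclidean_space \<Rightarrow> 'b::banach"
  assumes cf: "continuous_on UNIV f" and cg: "continuous_on UNIV g"
    and gint: "g integrable_on UNIV" and le: "\<And>x. norm (f x) \<le> g x"
  shows "f integrable_on UNIV"
proof -
  have fi: "f integrable_on cbox u v" for u v
    by (rule integrable_continuous) (rule continuous_on_subset[OF cf], simp)
  obtain I where gI: "(g has_integral I) UNIV" using gint by blast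
  have galt: "\<forall>e>0. \<exists>B>0. \<forall>a b. ball 0 B \<subseteq> cbox a b \<longrightarrow> norm (integral (cbox a b) g - I) < e"
    using gI has_integral_alt'[of g I UNIV] by simp
  show ?thesis
  proof (rule integrable_alt[THEN iffD2], intro conjI allI impI)
    fix a b :: 'n show "(\<lambda>x. if x \<in> UNIV then f x else 0) integrable_on cbox a b" using fi by simp
  next
    fix e :: real assume "e > 0"
    then obtain B where B: "B > 0" "\<And>a b. ball 0 B \<subseteq> cbox a b \<Longrightarrow> norm (integral (cbox a b) g - I) < e/4"
      using galt[rule_format, of "e/4"] by auto
    show "\<exists>B>0. \<forall>a b c d. ball 0 B \<subseteq> cbox a b \<and> ball 0 B \<subseteq> cbox c d \<longrightarrow>
      norm (integral (cbox a b) (\<lambda>x. if x \<in> UNIV then f x else 0) -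
      integral (cbox c d) (\<lambda>x. if x \<in> UNIV then f x else 0)) < e"
    proof (intro exI[of _ B] conjI allI impI)
      show "B > 0" by fact
      fix a b c d :: 'n
      assume H: "ball 0 B \<subseteq> cbox a b \<and> ball 0 B \<subseteq> cbox c d"
      define p where "p = (\<Sum>i\<in>Basis. max (a\<bullet>i) (c\<bullet>i) *\<^sub>R i :: 'n)"
      define q where "q = (\<Sum>i\<in>Basis. min (b\<bullet>i) (d\<bullet>i) *\<^sub>R i :: 'n)"
      have K: "cbox a b \<inter> cbox c d = cbox p q" unfolding p_def q_def by (rule Int_interval)
      have s1: "cbox p q \<subseteq> cbox a b" "cbox p q \<subseteq> cbox c d" using K by blast+
      have bK: "ball 0 B \<subseteq> cbox p q" using H K by blast
      have n1: "norm (integral (cbox a b) f - integral (cbox p q) f) \<le> integral (cbox a b) g - integral (cbox p q) g"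
        by (rule box_diff_bound[OF cf cg le s1(1)])
      have n2: "norm (integral (cbox c d) f - integral (cbox p q) f) \<le> integral (cbox c d) g - integral (cbox p q) g"
        by (rule box_diff_bound[OF cf cg le s1(2)])
      have g1: "norm (integral (cbox a b) g - I) < e/4" using B(2) H by blast
      have g2: "norm (integral (cbox c d) g - I) < e/4" using B(2) H by blast
      have g3: "norm (integral (cbox p q) g - I) < e/4" using B(2) bK by blast
      have "norm (integral (cbox a b) f - integral (cbox c d) f)
          \<le> norm (integral (cbox a b) f - integral (cbox p q) f) + norm (integral (cbox c d) f - integral (cbox p q) f)"
        using norm_triangle_ineq4[of "integral (cbox a b) f - integral (cbox p q) f" "integral (cbox c d) f - integral (cbox p q) f"]
        by simp
      also have "\<dots> < e" using n1 n2 g1 g2 g3 unfolding real_norm_def by arith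
      finally show "norm (integral (cbox a b) (\<lambda>x. if x \<in> UNIV then f x else 0) -
        integral (cbox c d) (\<lambda>x. if x \<in> UNIV then f x else 0)) < e" by simp
    qed
  qed
qed


context
  fixes \<pi> :: "heis \<Rightarrow> 'a::real_normed_vector \<Rightarrow> 'a"
  assumes R: "heis_isometric_rep \<pi>"
begin

lemma rep_lin: "linear (\<pi> g)" using R unfolding heis_isometric_rep_def by blast
lemma rep_norm: "norm (\<pi> g v) = norm v" using R unfolding heis_isometric_rep_def by blast
lemma rep_mul: "\<pi> (hmul g h) v = \<pi> g (\<pi> h v)" using R unfolding heis_isometric_rep_def by (metis comp_apply)
lemma rep_one: "\<pi> (0,0,0) v = v" using R unfolding heis_isometric_rep_def hone_def by simp
lemma rep_cont: "continuous_on UNIV (\<lambda>g. \<pi> g v)" using R unfolding heis_isometric_rep_def by blast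

lemma rep_bl: "bounded_linear (\<pi> g)"
proof -
  interpret linear "\<pi> g" by (rule rep_lin)
  show ?thesis
    by (rule bounded_linear_intro[where K=1]) (auto simp: add scale rep_norm)
qed

lemma rep_diff: "\<pi> g (x - y) = \<pi> g x - \<pi> g y"
  using rep_lin by (rule linear_diff)

lemma rep_dist: "norm (\<pi> (hmul k g) v - \<pi> (hmul k h) v) = norm (\<pi> g v - \<pi> h v)"
  by (simp add: rep_mul rep_diff[symmetric] rep_norm)

lemma pw:
  "norm (\<pi> (0,0,(s1-s2)*(t1-t2)) \<xi> - \<xi>)
   \<le> norm (\<pi> (s1,t1,s1*t1) \<xi> - \<pi> (s2,t1,s2*t1) \<xi>) + norm (\<pi> (s1,t2,s1*t2) \<xi> - \<pi> (s2,t2,s2*t2) \<xi>)"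
proof -
  define r where "r = s1 - s2"
  define \<tau> where "\<tau> = t1 - t2"
  define u where "u = r * \<tau>"
  let ?M = "\<pi> (-r, t2, -r*t2) \<xi>"
  have "norm (\<pi> (0,0,u) \<xi> - \<xi>) = norm (\<pi> (0,0,u) \<xi> - \<pi> (0,0,0) \<xi>)" by (simp add: rep_one)
  also have "\<dots> = norm (\<pi> (hmul (0,t2,0) (0,0,u)) \<xi> - \<pi> (hmul (0,t2,0) (0,0,0)) \<xi>)"
    by (rule rep_dist[symmetric])
  also have "\<dots> = norm (\<pi> (0,t2,u) \<xi> - \<pi> (0,t2,0) \<xi>)" by (simp add: hmul_def)
  also have "\<dots> \<le> norm (\<pi> (0,t2,u) \<xi> - ?M) + norm (?M - \<pi> (0,t2,0) \<xi>)"
    using norm_triangle_ineq[of "\<pi> (0,t2,u) \<xi> - ?M" "?M - \<pi> (0,t2,0) \<xi>"] by simp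
  also have "norm (\<pi> (0,t2,u) \<xi> - ?M) = norm (\<pi> (hmul (s1,\<tau>,s2*\<tau>) (0,t2,u)) \<xi> - \<pi> (hmul (s1,\<tau>,s2*\<tau>) (-r,t2,-r*t2)) \<xi>)"
    by (rule rep_dist[symmetric])
  also have "hmul (s1,\<tau>,s2*\<tau>) (0,t2,u) = (s1,t1,s1*t1)"
    by (simp add: hmul_def u_def r_def \<tau>_def algebra_simps)
  also have "hmul (s1,\<tau>,s2*\<tau>) (-r,t2,-r*t2) = (s2,t1,s2*t1)"
    by (simp add: hmul_def u_def r_def \<tau>_def algebra_simps)
  also have "norm (?M - \<pi> (0,t2,0) \<xi>) = norm (\<pi> (hmul (s1,0,0) (-r,t2,-r*t2)) \<xi> - \<pi> (hmul (s1,0,0) (0,t2,0)) \<xi>)"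
    by (rule rep_dist[symmetric])
  also have "hmul (s1,0,0) (-r,t2,-r*t2) = (s2,t2,s2*t2)"
    by (simp add: hmul_def r_def algebra_simps)
  also have "hmul (s1,0,0) (0,t2,0) = (s1,t2,s1*t2)"
    by (simp add: hmul_def)
  finally show ?thesis by (simp add: u_def r_def \<tau>_def norm_minus_commute)
qed

end


lemma half_norm_le:
  fixes x y :: "'a::real_normed_vector"
  assumes "norm x = n" "norm y = n"
  shows "norm ((1/2) *\<^sub>R (x + y)) \<le> n"
proof -
  have "norm ((1/2) *\<^sub>R (x + y)) = norm (x + y) / 2" by simp
  also have "\<dots> \<le> (norm x + norm y) / 2" using norm_triangle_ineq[of x y] by simp
  finally show ?thesis using assms by simp
qed

lemma uc_bound:
  fixes e :: real
  assumes uc: "uniformly_convex (UNIV :: 'a::real_normed_vector set)" and e: "0 < e"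
  obtains d where "0 < d" "d \<le> 1"
    "\<And>x y :: 'a. \<And>n. norm x = n \<Longrightarrow> norm y = n \<Longrightarrow>
        norm (x - y) \<le> e * n + (2 / d) * (n - norm ((1/2) *\<^sub>R (x + y)))"
proof -
  obtain d0 where d0: "d0 > 0" and P: "\<And>x y :: 'a. norm x \<le> 1 \<Longrightarrow> norm y \<le> 1 \<Longrightarrow> norm (x - y) \<ge> e \<Longrightarrow>
        norm ((1/2) *\<^sub>R (x + y)) \<le> 1 - d0"
  proof -
    have "\<exists>\<delta>>0. \<forall>x\<in>(UNIV::'a set). \<forall>y\<in>UNIV. norm x \<le> 1 \<longrightarrow> norm y \<le> 1 \<longrightarrow> norm (x - y) \<ge> e \<longrightarrow>
        norm ((1/2) *\<^sub>R (x + y)) \<le> 1 - \<delta>"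
      using uc e unfolding uniformly_convex_def by (elim allE[of _ e]) simp
    then obtain \<delta> where "\<delta> > 0" "\<forall>x\<in>(UNIV::'a set). \<forall>y\<in>UNIV. norm x \<le> 1 \<longrightarrow> norm y \<le> 1 \<longrightarrow> norm (x - y) \<ge> e \<longrightarrow>
        norm ((1/2) *\<^sub>R (x + y)) \<le> 1 - \<delta>" by (elim exE conjE)
    then show ?thesis using that by simp
  qed
  define d where "d = min d0 1"
  have d: "0 < d" "d \<le> 1" "d \<le> d0" using d0 by (auto simp: d_def)
  have main: "norm (x - y) \<le> e * n + (2 / d) * (n - norm ((1/2) *\<^sub>R (x + y)))"
    if xn: "norm x = n" and yn: "norm y = n" for x y :: 'a and n
  proof -
    have hn: "norm ((1/2) *\<^sub>R (x + y)) \<le> n" by (rule half_norm_le[OF xn yn])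
    have nn: "0 \<le> n" using xn by auto
    have t0: "0 \<le> (2 / d) * (n - norm ((1/2) *\<^sub>R (x + y)))" using hn d by simp
    show ?thesis
    proof (cases "norm (x - y) < e * n")
      case True then show ?thesis using t0 by linarith
    next
      case False
      hence ge: "e * n \<le> norm (x - y)" by simp
      show ?thesis
      proof (cases "n = 0")
        case True then show ?thesis using xn yn by simp
      next
        case False
        hence np: "0 < n" using nn by simp
        let ?x = "(1/n) *\<^sub>R x" and ?y = "(1/n) *\<^sub>R y"
        have "norm ?x = 1" "norm ?y = 1" using xn yn np by auto
        moreover have "norm (?x - ?y) = norm (x - y) / n"
          using np by (simp add: scaleR_diff_right[symmetric])
        moreover have "e \<le> norm (x - y) / n" using ge np by (simp add: field_simps)
        ultimately have "norm ((1/2) *\<^sub>R (?x + ?y)) \<le> 1 - d0" by (intro P) auto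
        moreover have "(1/2) *\<^sub>R (?x + ?y) = (1/n) *\<^sub>R ((1/2) *\<^sub>R (x + y))"
          by (simp add: scaleR_add_right mult.commute)
        hence "norm ((1/2) *\<^sub>R (x + y)) = n * norm ((1/2) *\<^sub>R (?x + ?y))"
          using np by simp
        ultimately have "norm ((1/2) *\<^sub>R (x + y)) \<le> n * (1 - d0)"
          using np by (simp add: mult_left_mono)
        hence "norm ((1/2) *\<^sub>R (x + y)) \<le> (1 - d0) * n" by (simp add: algebra_simps)
        moreover have "d * n \<le> d0 * n" by (rule mult_right_mono[OF d(3) nn])
        ultimately have "d * n \<le> n - norm ((1/2) *\<^sub>R (x + y))" by (simp add: algebra_simps)
        hence "2 * n \<le> (2 / d) * (n - norm ((1/2) *\<^sub>R (x + y)))" using d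
          by (simp add: field_simps)
        moreover have "norm (x - y) \<le> 2 * n" using norm_triangle_ineq4[of x y] xn yn by simp
        moreover have "0 \<le> e * n" using e nn by simp
        ultimately show ?thesis by linarith
      qed
    qed
  qed
  show ?thesis by (rule that[OF d(1) d(2) main])
qed


lemma nnhk:
  fixes f :: "'n::euclidean_space \<Rightarrow> real"
  assumes "continuous_on UNIV f" "\<And>x. 0 \<le> f x" "f integrable_on UNIV"
  shows "(\<integral>\<^sup>+x. ennreal (f x) \<partial>lborel) = ennreal (integral UNIV f)"
  by (rule nn_integral_has_integral_lborel[OF borel_measurable_continuous_onI[OF assms(1)] assms(2)])
     (use assms(3) in \<open>simp add: integrable_integral\<close>)

definition W :: "real \<Rightarrow> real \<Rightarrow> real \<times> real \<Rightarrow> real" where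
  "W a c p = gauss a (fst p) * gauss c (snd p)"

lemma W_cont: "continuous_on UNIV (W a c)"
  unfolding W_def
  by (intro continuous_intros continuous_on_compose2[OF gauss_cont]) auto

lemma W_pos: "0 < W a c p" unfolding W_def by (simp add: gauss_pos)

lemma W_nn: "(\<integral>\<^sup>+p. ennreal (W a c p) \<partial>lborel) = 1"
proof -
  have m: "(\<lambda>p. ennreal (W a c p)) \<in> borel_measurable (lborel \<Otimes>\<^sub>M lborel)"
    unfolding W_def by measurable
  have "(\<integral>\<^sup>+p. ennreal (W a c p) \<partial>lborel) = (\<integral>\<^sup>+p. ennreal (W a c p) \<partial>(lborel \<Otimes>\<^sub>M lborel))"
    by (simp add: lborel_prod)
  also have "\<dots> = (\<integral>\<^sup>+s. \<integral>\<^sup>+t. ennreal (W a c (s,t)) \<partial>lborel \<partial>lborel)"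
    by (rule lborel.nn_integral_fst[OF m, symmetric])
  also have "\<dots> = (\<integral>\<^sup>+s. ennreal (gauss a s) * (\<integral>\<^sup>+t. ennreal (gauss c t) \<partial>lborel) \<partial>lborel)"
    unfolding W_def
    by (rule nn_integral_cong, subst nn_integral_cmult[symmetric])
       (auto simp: ennreal_mult less_imp_le[OF gauss_pos])
  also have "\<dots> = 1" by (simp add: gauss_nn)
  finally show ?thesis .
qed

lemma W_has_int: "(W a c has_integral 1) UNIV"
  by (rule nn_integral_has_integral[OF borel_measurable_continuous_onI[OF W_cont]])
     (auto simp: W_nn less_imp_le[OF W_pos])

lemma W_int: "W a c integrable_on UNIV" using W_has_int by blast
lemma W_integral: "integral UNIV (W a c) = 1" using W_has_int by blast

lemma W_bounded_int:
  fixes F :: "real \<times> real \<Rightarrow> 'b::banach"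
  assumes "continuous_on UNIV F" "\<And>p. norm (F p) \<le> B"
  shows "(\<lambda>p. W a c p *\<^sub>R F p) integrable_on UNIV"
proof (rule bi)
  show "continuous_on UNIV (\<lambda>p. W a c p *\<^sub>R F p)" by (intro continuous_intros W_cont assms(1))
  show "continuous_on UNIV (\<lambda>p. B * W a c p)" by (intro continuous_intros W_cont)
  show "(\<lambda>p. B * W a c p) integrable_on UNIV" using has_integral_mult_right[OF W_has_int, of B] by blast
  fix p show "norm (W a c p *\<^sub>R F p) \<le> B * W a c p"
    using assms(2)[of p] W_pos[of a c p] by (simp add: mult_right_mono mult.commute)
qed

lemma g_bounded_int:
  fixes F :: "real \<Rightarrow> 'b::banach"
  assumes "continuous_on UNIV F" "\<And>p. norm (F p) \<le> B"
  shows "(\<lambda>p. gauss b p *\<^sub>R F p) integrable_on UNIV"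
proof (rule bi)
  show "continuous_on UNIV (\<lambda>p. gauss b p *\<^sub>R F p)" by (intro continuous_intros gauss_cont assms(1))
  show "continuous_on UNIV (\<lambda>p. B * gauss b p)" by (intro continuous_intros gauss_cont)
  show "(\<lambda>p. B * gauss b p) integrable_on UNIV" using has_integral_mult_right[OF gauss_has_int, of B] by blast
  fix p show "norm (gauss b p *\<^sub>R F p) \<le> B * gauss b p"
    using assms(2)[of p] gauss_pos[of b p] by (simp add: mult_right_mono mult.commute)
qed

definition Gst :: "(heis \<Rightarrow> 'a::real_normed_vector \<Rightarrow> 'a) \<Rightarrow> 'a \<Rightarrow> 'a \<Rightarrow> real \<Rightarrow> real \<Rightarrow> real" where
  "Gst \<pi> \<xi> y s t = norm (\<pi> (s, t, s*t) \<xi> - y)"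

definition hZ :: "(heis \<Rightarrow> 'a::real_normed_vector \<Rightarrow> 'a) \<Rightarrow> 'a \<Rightarrow> real \<Rightarrow> real" where
  "hZ \<pi> \<xi> u = norm (\<pi> (0, 0, u) \<xi> - \<xi>)"

context
  fixes \<pi> :: "heis \<Rightarrow> 'a::real_normed_vector \<Rightarrow> 'a"
  assumes R: "heis_isometric_rep \<pi>"
begin

lemma fv_cont: "continuous_on UNIV (\<lambda>p::real\<times>real. \<pi> (fst p, snd p, fst p * snd p) v)"
  by (rule continuous_on_compose2[OF rep_cont[OF R]]) (auto intro!: continuous_intros)

lemma Z_cont: "continuous_on UNIV (\<lambda>u::real. \<pi> (0, 0, u) v)"
  by (rule continuous_on_compose2[OF rep_cont[OF R]]) (auto intro!: continuous_intros)

lemma Gst_cont: "continuous_on UNIV (\<lambda>p. Gst \<pi> \<xi> y (fst p) (snd p))"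
  unfolding Gst_def by (intro continuous_intros fv_cont)

lemma hZ_cont: "continuous_on UNIV (hZ \<pi> \<xi>)"
  unfolding hZ_def[abs_def] by (intro continuous_intros Z_cont)

lemma Gst_measurable[measurable (raw)]:
  assumes "f \<in> borel_measurable M" "g \<in> borel_measurable M"
  shows "(\<lambda>x. Gst \<pi> \<xi> y (f x) (g x)) \<in> borel_measurable M"
proof -
  have c: "(\<lambda>p. Gst \<pi> \<xi> y (fst p) (snd p)) \<in> borel_measurable (borel \<Otimes>\<^sub>M borel)"
    unfolding borel_prod by (rule borel_measurable_continuous_onI[OF Gst_cont])
  have "(\<lambda>x. (f x, g x)) \<in> M \<rightarrow>\<^sub>M borel \<Otimes>\<^sub>M borel" using assms by measurable
  from measurable_compose[OF this c] show ?thesis by simp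
qed

lemma hZ_measurable[measurable (raw)]:
  assumes "f \<in> borel_measurable M"
  shows "(\<lambda>x. hZ \<pi> \<xi> (f x)) \<in> borel_measurable M"
  using measurable_compose[OF assms borel_measurable_continuous_onI[OF hZ_cont]] by simp

end


lemma dc:
  assumes r1: "2 * exp a \<le> r" and r2: "r \<le> 4 * exp a" and t1: "0 \<le> t2" and t2: "t2 \<le> exp c"
  shows "r * gauss (a + c) (r * (t - t2)) \<le> 4 * exp 1 * gauss c t"
proof -
  define A where "A = exp a"
  define E where "E = exp c"
  have A: "A > 0" and E: "E > 0" by (auto simp: A_def E_def)
  have eac: "exp (a + c) = A * E" by (simp add: A_def E_def exp_add)
  have rA: "4 \<le> (r / A)^2"
  proof -
    have "2 \<le> r / A" using r1 A by (simp add: A_def field_simps)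
    hence "2^2 \<le> (r/A)^2" by (rule power_mono) simp
    thus ?thesis by simp
  qed
  have sq: "t^2 - 4 * (t - t2)^2 \<le> 2 * E^2"
  proof -
    have "0 \<le> (3*t - 4*t2)^2" by simp
    hence "t^2 - 4 * (t - t2)^2 \<le> 4/3 * t2^2" by (simp add: power2_eq_square algebra_simps)
    moreover have "t2^2 \<le> E^2" using t1 t2 by (simp add: E_def power_mono)
    ultimately show ?thesis using zero_le_power2[of E] by linarith
  qed
  have ex: "- ((r * (t - t2))^2 / (2 * (A*E)^2)) \<le> 1 + - (t^2 / (2 * E^2))"
  proof -
    have "(r * (t - t2))^2 = r^2 * (t - t2)^2" by (simp only: power_mult_distrib)
    hence "(r * (t - t2))^2 / (2 * (A*E)^2) = (r/A)^2 * (t - t2)^2 / (2 * E^2)"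
      using A E by (simp add: power_mult_distrib power_divide)
    also have "\<dots> \<ge> 4 * (t - t2)^2 / (2 * E^2)"
      using rA E by (intro divide_right_mono mult_right_mono) auto
    finally have "4 * (t - t2)^2 / (2 * E^2) \<le> (r * (t - t2))^2 / (2 * (A*E)^2)" .
    moreover have "t^2 / (2 * E^2) - 4 * (t - t2)^2 / (2 * E^2) \<le> 1"
      using sq E by (simp add: diff_divide_distrib[symmetric] field_simps)
    ultimately show ?thesis by linarith
  qed
  have "exp (- ((r * (t - t2))^2) / (2 * (A*E)^2)) \<le> exp 1 * exp (- (t^2) / (2 * E^2))"
    using ex by (simp add: exp_add[symmetric])
  moreover have "r / (A * E) \<le> 4 / E" using r2 A E by (simp add: A_def field_simps)
  ultimately have "r / (A * E) * exp (- ((r * (t - t2))^2) / (2 * (A*E)^2)) \<le> 4 / E * (exp 1 * exp (- (t^2) / (2 * E^2)))"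
    using A E r1 by (intro mult_mono) auto
  thus ?thesis
    unfolding gauss_eq eac E_def[symmetric] using A E
    by (simp add: field_simps)
qed


context
  fixes \<pi> :: "heis \<Rightarrow> 'a::real_normed_vector \<Rightarrow> 'a"
  assumes R: "heis_isometric_rep \<pi>"
begin

lemmas Gst_meas[measurable (raw)] = Gst_measurable[OF R]
lemmas hZ_meas[measurable (raw)] = hZ_measurable[OF R]

lemma Gst_nonneg: "0 \<le> Gst \<pi> \<xi> y s t" by (simp add: Gst_def)
lemma hZ_nonneg: "0 \<le> hZ \<pi> \<xi> u" by (simp add: hZ_def)

lemma pw2: "hZ \<pi> \<xi> ((s1 - s2) * (t - t2))
   \<le> Gst \<pi> \<xi> y s1 t + Gst \<pi> \<xi> y s2 t + (Gst \<pi> \<xi> y s1 t2 + Gst \<pi> \<xi> y s2 t2)"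
proof -
  have tri: "norm (u - v) \<le> norm (u - y) + norm (v - y)" for u v :: 'a
    using norm_triangle_ineq4[of "u - y" "v - y"] by simp
  show ?thesis
    using pw[OF R, of s1 s2 t t2 \<xi>] tri[of "\<pi> (s1, t, s1 * t) \<xi>" "\<pi> (s2, t, s2 * t) \<xi>"]
      tri[of "\<pi> (s1, t2, s1 * t2) \<xi>" "\<pi> (s2, t2, s2 * t2) \<xi>"]
    unfolding hZ_def Gst_def by linarith
qed

lemma tonelli1:
  "(\<integral>\<^sup>+p. ennreal (W a c p * Gst \<pi> \<xi> y (fst p) (snd p)) \<partial>lborel)
   = (\<integral>\<^sup>+s. (\<integral>\<^sup>+t. ennreal (gauss c t * Gst \<pi> \<xi> y s t) \<partial>lborel) * ennreal (gauss a s) \<partial>lborel)"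
proof -
  have m: "(\<lambda>p. ennreal (W a c p * Gst \<pi> \<xi> y (fst p) (snd p))) \<in> borel_measurable (lborel \<Otimes>\<^sub>M lborel)"
    unfolding W_def by measurable
  have "(\<integral>\<^sup>+p. ennreal (W a c p * Gst \<pi> \<xi> y (fst p) (snd p)) \<partial>lborel)
      = (\<integral>\<^sup>+p. ennreal (W a c p * Gst \<pi> \<xi> y (fst p) (snd p)) \<partial>(lborel \<Otimes>\<^sub>M lborel))"
    by (simp add: lborel_prod)
  also have "\<dots> = (\<integral>\<^sup>+s. \<integral>\<^sup>+t. ennreal (W a c (s,t) * Gst \<pi> \<xi> y s t) \<partial>lborel \<partial>lborel)"
    using lborel.nn_integral_fst[OF m, symmetric] by simp
  also have "\<dots> = (\<integral>\<^sup>+s. (\<integral>\<^sup>+t. ennreal (gauss c t * Gst \<pi> \<xi> y s t) \<partial>lborel) * ennreal (gauss a s) \<partial>lborel)"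
  proof (rule nn_integral_cong)
    fix s
    have "(\<integral>\<^sup>+t. ennreal (W a c (s,t) * Gst \<pi> \<xi> y s t) \<partial>lborel)
        = (\<integral>\<^sup>+t. ennreal (gauss a s) * ennreal (gauss c t * Gst \<pi> \<xi> y s t) \<partial>lborel)"
      by (rule nn_integral_cong)
         (simp add: W_def ennreal_mult[symmetric] less_imp_le[OF gauss_pos] Gst_nonneg mult.assoc)
    also have "\<dots> = ennreal (gauss a s) * (\<integral>\<^sup>+t. ennreal (gauss c t * Gst \<pi> \<xi> y s t) \<partial>lborel)"
      by (rule nn_integral_cmult) measurable
    finally show "(\<integral>\<^sup>+t. ennreal (W a c (s,t) * Gst \<pi> \<xi> y s t) \<partial>lborel)
       = (\<integral>\<^sup>+t. ennreal (gauss c t * Gst \<pi> \<xi> y s t) \<partial>lborel) * ennreal (gauss a s)"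
      by (simp add: mult.commute)
  qed
  finally show ?thesis .
qed

lemma tonelli2:
  "(\<integral>\<^sup>+p. ennreal (W a c p * Gst \<pi> \<xi> y (fst p) (snd p)) \<partial>lborel)
   = (\<integral>\<^sup>+t. (\<integral>\<^sup>+s. ennreal (gauss a s * Gst \<pi> \<xi> y s t) \<partial>lborel) * ennreal (gauss c t) \<partial>lborel)"
proof -
  have m: "(\<lambda>p. ennreal (W a c p * Gst \<pi> \<xi> y (fst p) (snd p))) \<in> borel_measurable (lborel \<Otimes>\<^sub>M lborel)"
    unfolding W_def by measurable
  have "(\<integral>\<^sup>+p. ennreal (W a c p * Gst \<pi> \<xi> y (fst p) (snd p)) \<partial>lborel)
      = (\<integral>\<^sup>+p. ennreal (W a c p * Gst \<pi> \<xi> y (fst p) (snd p)) \<partial>(lborel \<Otimes>\<^sub>M lborel))"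
    by (simp add: lborel_prod)
  also have "\<dots> = (\<integral>\<^sup>+t. \<integral>\<^sup>+s. ennreal (W a c (s,t) * Gst \<pi> \<xi> y s t) \<partial>lborel \<partial>lborel)"
    using lborel_pair.nn_integral_snd[OF m, symmetric] by simp
  also have "\<dots> = (\<integral>\<^sup>+t. (\<integral>\<^sup>+s. ennreal (gauss a s * Gst \<pi> \<xi> y s t) \<partial>lborel) * ennreal (gauss c t) \<partial>lborel)"
  proof (rule nn_integral_cong)
    fix t
    have "(\<integral>\<^sup>+s. ennreal (W a c (s,t) * Gst \<pi> \<xi> y s t) \<partial>lborel)
        = (\<integral>\<^sup>+s. ennreal (gauss c t) * ennreal (gauss a s * Gst \<pi> \<xi> y s t) \<partial>lborel)"
      by (rule nn_integral_cong)
         (simp add: W_def ennreal_mult[symmetric] less_imp_le[OF gauss_pos] Gst_nonneg mult.assoc mult.left_commute)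
    also have "\<dots> = ennreal (gauss c t) * (\<integral>\<^sup>+s. ennreal (gauss a s * Gst \<pi> \<xi> y s t) \<partial>lborel)"
      by (rule nn_integral_cmult) measurable
    finally show "(\<integral>\<^sup>+s. ennreal (W a c (s,t) * Gst \<pi> \<xi> y s t) \<partial>lborel)
       = (\<integral>\<^sup>+s. ennreal (gauss a s * Gst \<pi> \<xi> y s t) \<partial>lborel) * ennreal (gauss c t)"
      by (simp add: mult.commute)
  qed
  finally show ?thesis .
qed

end


context
  fixes \<pi> :: "heis \<Rightarrow> 'a::real_normed_vector \<Rightarrow> 'a"
  assumes R: "heis_isometric_rep \<pi>"
begin

lemmas Gst_meas'[measurable (raw)] = Gst_measurable[OF R]
lemmas hZ_meas'[measurable (raw)] = hZ_measurable[OF R]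
lemmas Gst_nn = Gst_nonneg[OF R]
lemmas hZ_nn = hZ_nonneg[OF R]

lemma core:
  assumes E1: "(\<integral>\<^sup>+p. ennreal (W a c p * Gst \<pi> \<xi> y (fst p) (snd p)) \<partial>lborel) \<le> ennreal e1"
    and e1: "0 < e1"
  shows "(\<integral>\<^sup>+u. ennreal (gauss (a+c) u * hZ \<pi> \<xi> u) \<partial>lborel) \<le> ennreal (16 * exp 1 * (e1 + 2*e1/kap) / kap)"
proof -
  let ?G = "Gst \<pi> \<xi> y"
  define \<Psi> where "\<Psi> = (\<lambda>s. \<integral>\<^sup>+t. ennreal (gauss c t * ?G s t) \<partial>lborel)"
  define \<Psi>' where "\<Psi>' = (\<lambda>t. \<integral>\<^sup>+s. ennreal (gauss a s * ?G s t) \<partial>lborel)"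
  have [measurable]: "\<Psi> \<in> borel_measurable borel" unfolding \<Psi>_def by measurable
  have [measurable]: "\<Psi>' \<in> borel_measurable borel" unfolding \<Psi>'_def by measurable
  have kp: "0 < kap" by (rule kap_pos)
  have I2: "(\<integral>\<^sup>+t. \<Psi>' t * ennreal (gauss c t) \<partial>lborel) \<le> ennreal e1"
    using E1 tonelli2[OF R, of a c \<xi> y] unfolding \<Psi>'_def by simp
  have I1: "(\<integral>\<^sup>+s. \<Psi> s * ennreal (gauss a s) \<partial>lborel) \<le> ennreal e1"
    using E1 tonelli1[OF R, of a c \<xi> y] unfolding \<Psi>_def by simp
  obtain t2 where t2: "t2 \<in> {0..0 + exp c}" and t2b: "\<Psi>' t2 \<le> ennreal (2 * e1 / kap)"
    using avg_choose[of \<Psi>' c e1 0] I2 e1 by auto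
  define A1 where "A1 = e1 + 2 * e1 / kap"
  have A1: "0 < A1" using e1 kp by (simp add: A1_def add_pos_pos)
  define H1 where "H1 = (\<lambda>s. \<Psi> s + ennreal (?G s t2))"
  have [measurable]: "H1 \<in> borel_measurable borel" unfolding H1_def by measurable
  have "(\<integral>\<^sup>+s. H1 s * ennreal (gauss a s) \<partial>lborel)
      = (\<integral>\<^sup>+s. \<Psi> s * ennreal (gauss a s) + ennreal (gauss a s * ?G s t2) \<partial>lborel)"
    by (rule nn_integral_cong)
       (simp add: H1_def distrib_left ennreal_mult' less_imp_le[OF gauss_pos] Gst_nn mult.commute)
  also have "\<dots> = (\<integral>\<^sup>+s. \<Psi> s * ennreal (gauss a s) \<partial>lborel) + \<Psi>' t2"
    unfolding \<Psi>'_def by (rule nn_integral_add) measurable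
  also have "\<dots> \<le> ennreal e1 + ennreal (2 * e1 / kap)"
    by (rule add_mono[OF I1 t2b])
  also have "\<dots> = ennreal A1" unfolding A1_def using e1 kp by simp
  finally have IH1: "(\<integral>\<^sup>+s. H1 s * ennreal (gauss a s) \<partial>lborel) \<le> ennreal A1" .
  obtain s1 where s1: "s1 \<in> {exp a..exp a + exp a}" and s1b: "H1 s1 \<le> ennreal (2 * A1 / kap)"
    using avg_choose[of H1 a A1 "exp a"] IH1 A1 by auto
  obtain s2 where s2: "s2 \<in> {-2 * exp a..-2 * exp a + exp a}" and s2b: "H1 s2 \<le> ennreal (2 * A1 / kap)"
    using avg_choose[of H1 a A1 "-2 * exp a"] IH1 A1 by auto
  define r where "r = s1 - s2"
  have r1: "2 * exp a \<le> r" and r2: "r \<le> 4 * exp a" using s1 s2 by (auto simp: r_def)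
  have rpos: "0 < r" using r1 by (smt (verit) exp_gt_zero)
  define C where "C = ?G s1 t2 + ?G s2 t2"
  have C0: "0 \<le> C" by (simp add: C_def Gst_nn add_nonneg_nonneg)
  define \<Phi> where "\<Phi> = (\<integral>\<^sup>+t. ennreal (gauss c t * hZ \<pi> \<xi> (r * (t - t2))) \<partial>lborel)"
  have "\<Phi> \<le> (\<integral>\<^sup>+t. ennreal (gauss c t * ?G s1 t) + ennreal (gauss c t * ?G s2 t) + ennreal C * ennreal (gauss c t) \<partial>lborel)"
    unfolding \<Phi>_def
  proof (rule nn_integral_mono)
    fix t
    have g: "0 \<le> gauss c t" by (rule less_imp_le[OF gauss_pos])
    have "gauss c t * hZ \<pi> \<xi> (r * (t - t2)) \<le> gauss c t * (?G s1 t + ?G s2 t + C)"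
      using pw2[OF R, of \<xi> s1 s2 t t2 y] g unfolding C_def r_def by (intro mult_left_mono) auto
    hence "ennreal (gauss c t * hZ \<pi> \<xi> (r * (t - t2))) \<le> ennreal (gauss c t * (?G s1 t + ?G s2 t + C))"
      by (rule ennreal_leI)
    also have "\<dots> = ennreal (gauss c t * ?G s1 t) + ennreal (gauss c t * ?G s2 t) + ennreal C * ennreal (gauss c t)"
      using g C0 by (simp add: distrib_left ennreal_mult[symmetric] Gst_nn mult.commute)
    finally show "ennreal (gauss c t * hZ \<pi> \<xi> (r * (t - t2))) \<le> ennreal (gauss c t * ?G s1 t) + ennreal (gauss c t * ?G s2 t) + ennreal C * ennreal (gauss c t)" .
  qed
  also have "\<dots> = (\<integral>\<^sup>+t. ennreal (gauss c t * ?G s1 t) + ennreal (gauss c t * ?G s2 t) \<partial>lborel) + (\<integral>\<^sup>+t. ennreal C * ennreal (gauss c t) \<partial>lborel)"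
    by (rule nn_integral_add) measurable
  also have "\<dots> = \<Psi> s1 + \<Psi> s2 + ennreal C"
    by (subst nn_integral_add) (auto simp: \<Psi>_def nn_integral_cmult gauss_nn)
  also have "\<dots> = H1 s1 + H1 s2"
    unfolding H1_def C_def by (simp add: Gst_nn add_ac)
  also have "\<dots> \<le> ennreal (2 * A1 / kap) + ennreal (2 * A1 / kap)"
    by (rule add_mono[OF s1b s2b])
  also have "\<dots> = ennreal (4 * A1 / kap)" using A1 kp by (simp add: ennreal_plus[symmetric] del: ennreal_plus)
  finally have \<Phi>b: "\<Phi> \<le> ennreal (4 * A1 / kap)" .
  have "(\<integral>\<^sup>+u. ennreal (gauss (a+c) u * hZ \<pi> \<xi> u) \<partial>lborel)
      = ennreal \<bar>r\<bar> * (\<integral>\<^sup>+t. ennreal (gauss (a+c) (- r * t2 + r * t) * hZ \<pi> \<xi> (- r * t2 + r * t)) \<partial>lborel)"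
    by (rule nn_integral_real_affine) (use rpos in auto)
  also have "\<dots> = (\<integral>\<^sup>+t. ennreal (r * gauss (a+c) (r * (t - t2)) * hZ \<pi> \<xi> (r * (t - t2))) \<partial>lborel)"
    using rpos
    by (subst nn_integral_cmult[symmetric])
       (auto intro!: nn_integral_cong simp: ennreal_mult[symmetric] less_imp_le[OF gauss_pos] hZ_nn
             algebra_simps)
  also have "\<dots> \<le> (\<integral>\<^sup>+t. ennreal (4 * exp 1) * ennreal (gauss c t * hZ \<pi> \<xi> (r * (t - t2))) \<partial>lborel)"
  proof (rule nn_integral_mono)
    fix t
    have "r * gauss (a+c) (r * (t - t2)) * hZ \<pi> \<xi> (r * (t - t2)) \<le> 4 * exp 1 * gauss c t * hZ \<pi> \<xi> (r * (t - t2))"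
      using dc[OF r1 r2, of t2 c t] t2 hZ_nn by (intro mult_right_mono) auto
    thus "ennreal (r * gauss (a+c) (r * (t - t2)) * hZ \<pi> \<xi> (r * (t - t2))) \<le> ennreal (4 * exp 1) * ennreal (gauss c t * hZ \<pi> \<xi> (r * (t - t2)))"
      by (simp add: ennreal_mult[symmetric] less_imp_le[OF gauss_pos] hZ_nn mult.assoc ennreal_leI)
  qed
  also have "\<dots> = ennreal (4 * exp 1) * \<Phi>"
    unfolding \<Phi>_def by (rule nn_integral_cmult) measurable
  also have "\<dots> \<le> ennreal (4 * exp 1) * ennreal (4 * A1 / kap)"
    by (rule mult_left_mono[OF \<Phi>b]) simp
  also have "\<dots> = ennreal (16 * exp 1 * A1 / kap)"
    using A1 kp by (simp add: ennreal_mult[symmetric])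
  finally show ?thesis unfolding A1_def .
qed

end


lemma piXY_eq: "piXY \<pi> a c v = integral UNIV (\<lambda>p. W a c p *\<^sub>R \<pi> (fst p, snd p, fst p * snd p) v)"
  unfolding piXY_def W_def
  by (rule arg_cong[where f="integral UNIV"]) (auto simp: hmul_def Xg_def Yg_def)

lemma piZ_eq: "piZ \<pi> b v = integral UNIV (\<lambda>u. gauss b u *\<^sub>R \<pi> (0, 0, u) v)"
  unfolding piZ_def Zg_def by simp

context
  fixes \<pi> :: "heis \<Rightarrow> 'a::banach \<Rightarrow> 'a"
  assumes R: "heis_isometric_rep \<pi>"
begin

lemma F_int: "(\<lambda>p. W a c p *\<^sub>R \<pi> (fst p, snd p, fst p * snd p) v) integrable_on UNIV"
  by (rule W_bounded_int[where B="norm v"]) (auto simp: fv_cont[OF R] rep_norm[OF R])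

lemma eta_le: "norm (piXY \<pi> a c v) \<le> norm v"
proof -
  have "norm (piXY \<pi> a c v) \<le> integral UNIV (\<lambda>p. norm v * W a c p)"
    unfolding piXY_eq
  proof (rule integral_norm_bound_integral[OF F_int])
    show "(\<lambda>p. norm v * W a c p) integrable_on UNIV"
      using has_integral_mult_right[OF W_has_int, of "norm v"] by blast
    fix p show "norm (W a c p *\<^sub>R \<pi> (fst p, snd p, fst p * snd p) v) \<le> norm v * W a c p"
      using W_pos[of a c p] by (simp add: rep_norm[OF R])
  qed
  also have "\<dots> = norm v"
    using integral_unique[OF has_integral_mult_right[OF W_has_int, of "norm v"]] by simp
  finally show ?thesis .
qed

lemma lowerZ: "norm v - integral UNIV (\<lambda>u. gauss b u * hZ \<pi> v u) \<le> norm (piZ \<pi> b v)"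
proof -
  have i1: "(\<lambda>u. gauss b u *\<^sub>R \<pi> (0, 0, u) v) integrable_on UNIV"
    by (rule g_bounded_int[where B="norm v"]) (auto simp: Z_cont[OF R] rep_norm[OF R])
  have i2: "((\<lambda>u. gauss b u *\<^sub>R v) has_integral (1 *\<^sub>R v)) UNIV"
    by (rule has_integral_scaleR_left[OF gauss_has_int])
  have i3: "(\<lambda>u. gauss b u *\<^sub>R hZ \<pi> v u) integrable_on UNIV"
    by (rule g_bounded_int[where B="2 * norm v", OF hZ_cont[OF R]])
       (auto simp: hZ_def intro!: order_trans[OF norm_triangle_ineq4] simp: rep_norm[OF R])
  have "piZ \<pi> b v - v = integral UNIV (\<lambda>u. gauss b u *\<^sub>R \<pi> (0, 0, u) v - gauss b u *\<^sub>R v)"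
    unfolding piZ_eq using integral_diff[OF i1 has_integral_integrable[OF i2]] integral_unique[OF i2]
    by simp
  also have "norm \<dots> \<le> integral UNIV (\<lambda>u. gauss b u *\<^sub>R hZ \<pi> v u)"
  proof (rule integral_norm_bound_integral[OF integrable_diff[OF i1 has_integral_integrable[OF i2]] i3])
    fix u show "norm (gauss b u *\<^sub>R \<pi> (0, 0, u) v - gauss b u *\<^sub>R v) \<le> gauss b u *\<^sub>R hZ \<pi> v u"
      using gauss_pos[of b u] by (simp add: hZ_def scaleR_diff_right[symmetric])
  qed
  finally have "norm (piZ \<pi> b v - v) \<le> integral UNIV (\<lambda>u. gauss b u * hZ \<pi> v u)" by simp
  moreover have "norm v - norm (piZ \<pi> b v) \<le> norm (piZ \<pi> b v - v)"
    using norm_triangle_ineq2[of v "piZ \<pi> b v"] by (simp add: norm_minus_commute)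
  ultimately show ?thesis by linarith
qed

lemma hZ_int_eq: "(\<integral>\<^sup>+u. ennreal (gauss b u * hZ \<pi> v u) \<partial>lborel) = ennreal (integral UNIV (\<lambda>u. gauss b u * hZ \<pi> v u))"
proof (rule nnhk)
  show "continuous_on UNIV (\<lambda>u. gauss b u * hZ \<pi> v u)" by (intro continuous_intros gauss_cont hZ_cont[OF R])
  show "0 \<le> gauss b u * hZ \<pi> v u" for u using gauss_pos[of b u] hZ_nonneg[OF R] by simp
  have "(\<lambda>u. gauss b u *\<^sub>R hZ \<pi> v u) integrable_on UNIV"
    by (rule g_bounded_int[where B="2 * norm v", OF hZ_cont[OF R]])
       (auto simp: hZ_def intro!: order_trans[OF norm_triangle_ineq4] simp: rep_norm[OF R])
  thus "(\<lambda>u. gauss b u * hZ \<pi> v u) integrable_on UNIV" by simp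
qed

lemma G_int: "(\<lambda>p. W a c p * Gst \<pi> v y (fst p) (snd p)) integrable_on UNIV"
proof -
  have "(\<lambda>p. W a c p *\<^sub>R Gst \<pi> v y (fst p) (snd p)) integrable_on UNIV"
    by (rule W_bounded_int[where B="norm v + norm y", OF Gst_cont[OF R]])
       (auto simp: Gst_def intro!: order_trans[OF norm_triangle_ineq4] simp: rep_norm[OF R])
  thus ?thesis by simp
qed

lemma G_nn_eq: "(\<integral>\<^sup>+p. ennreal (W a c p * Gst \<pi> v y (fst p) (snd p)) \<partial>lborel)
   = ennreal (integral UNIV (\<lambda>p. W a c p * Gst \<pi> v y (fst p) (snd p)))"
  by (rule nnhk[OF _ _ G_int]) (auto intro!: continuous_intros W_cont Gst_cont[OF R]
      simp: less_imp_le[OF W_pos] Gst_nonneg[OF R])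

end


context
  fixes \<pi> :: "heis \<Rightarrow> 'a::banach \<Rightarrow> 'a"
  assumes R: "heis_isometric_rep \<pi>"
begin

lemma ucstep:
  assumes P: "\<And>x y :: 'a. \<And>n. norm x = n \<Longrightarrow> norm y = n \<Longrightarrow>
        norm (x - y) \<le> e * n + (2 / d) * (n - norm ((1/2) *\<^sub>R (x + y)))"
    and d: "0 < d" and ny: "norm y = norm v"
    and hy: "norm (piXY \<pi> a c v + y) = norm (piXY \<pi> a c v) + norm v"
  shows "integral UNIV (\<lambda>p. W a c p * Gst \<pi> v y (fst p) (snd p))
     \<le> e * norm v + (2 / d) * (norm v - (norm (piXY \<pi> a c v) + norm v) / 2)"
proof -
  define n where "n = norm v"
  define \<eta> where "\<eta> = piXY \<pi> a c v"
  define F where "F = (\<lambda>p::real\<times>real. \<pi> (fst p, snd p, fst p * snd p) v)"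
  define H where "H = (\<lambda>p. norm ((1/2) *\<^sub>R (F p + y)))"
  have Fn: "norm (F p) = n" for p by (simp add: F_def n_def rep_norm[OF R])
  have Fc: "continuous_on UNIV F" unfolding F_def by (rule fv_cont[OF R])
  have hF: "((\<lambda>p. W a c p *\<^sub>R F p) has_integral \<eta>) UNIV"
    unfolding \<eta>_def piXY_eq F_def using F_int[OF R] by (rule integrable_integral)
  have iWH: "(\<lambda>p. W a c p *\<^sub>R H p) integrable_on UNIV"
  proof (rule W_bounded_int[where B="n"])
    show "continuous_on UNIV H" unfolding H_def by (intro continuous_intros Fc)
    fix p show "norm (H p) \<le> n" unfolding H_def using half_norm_le[OF Fn[of p] ny[folded n_def]] by simp
  qed
  define IH where "IH = integral UNIV (\<lambda>p. W a c p * H p)"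
  have hWH: "((\<lambda>p. W a c p * H p) has_integral IH) UNIV"
    unfolding IH_def using iWH by (simp add: integrable_integral)
  have hf: "((\<lambda>p. W a c p *\<^sub>R ((1/2) *\<^sub>R (F p + y))) has_integral ((1/2) *\<^sub>R (\<eta> + 1 *\<^sub>R y))) UNIV"
  proof -
    have "((\<lambda>p. (1/2) *\<^sub>R (W a c p *\<^sub>R F p + W a c p *\<^sub>R y)) has_integral ((1/2) *\<^sub>R (\<eta> + 1 *\<^sub>R y))) UNIV"
      by (intro has_integral_cmul has_integral_add hF has_integral_scaleR_left W_has_int)
    moreover have "(\<lambda>p. (1/2) *\<^sub>R (W a c p *\<^sub>R F p + W a c p *\<^sub>R y)) = (\<lambda>p. W a c p *\<^sub>R ((1/2) *\<^sub>R (F p + y)))"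
      by (simp add: fun_eq_iff scaleR_add_right)
    ultimately show ?thesis by simp
  qed
  have low: "(norm \<eta> + n) / 2 \<le> IH"
  proof -
    have "norm ((1/2) *\<^sub>R (\<eta> + y)) = (norm \<eta> + n) / 2"
      using hy unfolding \<eta>_def n_def by simp
    moreover have "norm (integral UNIV (\<lambda>p. W a c p *\<^sub>R ((1/2) *\<^sub>R (F p + y)))) \<le> integral UNIV (\<lambda>p. W a c p * H p)"
    proof (rule integral_norm_bound_integral)
      show "(\<lambda>p. W a c p *\<^sub>R ((1/2) *\<^sub>R (F p + y))) integrable_on UNIV" using hf by blast
      show "(\<lambda>p. W a c p * H p) integrable_on UNIV" using hWH by blast
      fix p show "norm (W a c p *\<^sub>R ((1/2) *\<^sub>R (F p + y))) \<le> W a c p * H p"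
        unfolding H_def using W_pos[of a c p] by simp
    qed
    ultimately show ?thesis using integral_unique[OF hf] unfolding IH_def by simp
  qed
  have hG: "((\<lambda>p. W a c p * Gst \<pi> v y (fst p) (snd p)) has_integral integral UNIV (\<lambda>p. W a c p * Gst \<pi> v y (fst p) (snd p))) UNIV"
    using G_int[OF R] by (rule integrable_integral)
  have hR: "((\<lambda>p. e * n * W a c p + (2/d) * n * W a c p - (2/d) * (W a c p * H p)) has_integral (e * n * 1 + (2/d) * n * 1 - (2/d) * IH)) UNIV"
    by (intro has_integral_diff has_integral_add has_integral_mult_right W_has_int hWH)
  have "integral UNIV (\<lambda>p. W a c p * Gst \<pi> v y (fst p) (snd p)) \<le> e * n * 1 + (2/d) * n * 1 - (2/d) * IH"
  proof (rule has_integral_le[OF hG hR])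
    fix p
    have "Gst \<pi> v y (fst p) (snd p) \<le> e * n + (2 / d) * (n - H p)"
      unfolding Gst_def H_def using P[OF Fn[of p] ny[folded n_def]] by (simp add: F_def)
    hence "W a c p * Gst \<pi> v y (fst p) (snd p) \<le> W a c p * (e * n + (2 / d) * (n - H p))"
      using W_pos[of a c p] by (intro mult_left_mono) auto
    thus "W a c p * Gst \<pi> v y (fst p) (snd p) \<le> e * n * W a c p + (2/d) * n * W a c p - (2/d) * (W a c p * H p)"
      by (simp add: ring_distribs mult_ac diff_divide_distrib)
  qed
  also have "\<dots> \<le> e * n + (2 / d) * (n - (norm \<eta> + n) / 2)"
  proof -
    have k: "(2/d) * ((norm \<eta> + n) / 2) \<le> (2/d) * IH" using low d by (intro mult_left_mono) auto
    show ?thesis unfolding right_diff_distrib using k by linarith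
  qed
  finally show ?thesis unfolding n_def \<eta>_def .
qed

end


lemma kap_le1: "kap \<le> 1"
proof -
  have "exp (-2::real) \<le> 1" by simp
  moreover have "1 \<le> sqrt (2*pi)" using pi_gt3 by simp
  ultimately show ?thesis unfolding kap_def
    by (smt (verit) divide_le_eq_1 exp_gt_zero)
qed

theorem lemma4p2:
  assumes "uniformly_convex (UNIV :: 'a::banach set)"
  shows "\<exists>q0::real. q0 < 1 \<and>
    (\<forall>\<pi> :: heis \<Rightarrow> 'a \<Rightarrow> 'a. heis_isometric_rep \<pi> \<longrightarrow>
      (\<forall>a c :: real. \<forall>\<xi> :: 'a.
         norm (piXY \<pi> a c \<xi>) \<le> max (q0 * norm \<xi>) (2 * norm (piZ \<pi> (a + c) \<xi>))))"
proof -
  have kp: "0 < kap" by (rule kap_pos)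
  define e0 where "e0 = kap^2 / (192 * (kap + 2))"
  have e0: "0 < e0" using kp by (simp add: e0_def)
  have e01: "e0 \<le> 1"
  proof -
    have "kap^2 \<le> 1" using kap_le1 kp by (simp add: power_le_one)
    also have "1 \<le> 192 * (kap + 2)" using kp by simp
    finally show ?thesis unfolding e0_def using kp by simp
  qed
  obtain d where d: "0 < d" "d \<le> 1" and P: "\<And>x y :: 'a. \<And>n. norm x = n \<Longrightarrow> norm y = n \<Longrightarrow>
        norm (x - y) \<le> e0 * n + (2 / d) * (n - norm ((1/2) *\<^sub>R (x + y)))"
    using uc_bound[OF assms e0] by blast
  define q0 where "q0 = 1 - d * e0"
  have q0: "q0 < 1" "0 \<le> q0" using d e0 e01 unfolding q0_def
    by (auto simp: mult_le_one)
  show ?thesis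
  proof (intro exI[of _ q0] conjI allI impI)
    show "q0 < 1" by fact
    fix \<pi> :: "heis \<Rightarrow> 'a \<Rightarrow> 'a" and a c :: real and \<xi> :: 'a
    assume R: "heis_isometric_rep \<pi>"
    define \<eta> where "\<eta> = piXY \<pi> a c \<xi>"
    define n where "n = norm \<xi>"
    show "norm (piXY \<pi> a c \<xi>) \<le> max (q0 * norm \<xi>) (2 * norm (piZ \<pi> (a + c) \<xi>))"
    proof (cases "norm \<eta> \<le> q0 * n")
      case True then show ?thesis unfolding \<eta>_def n_def by simp
    next
      case False
      hence big: "q0 * n < norm \<eta>" by simp
      have etan: "norm \<eta> \<le> n" unfolding \<eta>_def n_def by (rule eta_le[OF R])
      have etap: "0 < norm \<eta>" using big q0 n_def
        by (smt (verit) mult_nonneg_nonneg norm_ge_zero)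
      have np: "0 < n" using etan etap by linarith
      define y where "y = (n / norm \<eta>) *\<^sub>R \<eta>"
      have ny: "norm y = n" unfolding y_def using etap np by simp
      have "\<eta> + y = (1 + n / norm \<eta>) *\<^sub>R \<eta>" unfolding y_def by (simp add: algebra_simps)
      hence hy: "norm (\<eta> + y) = norm \<eta> + n"
        using etap np by (simp add: distrib_right)
      define e1 where "e1 = e0 * n + (n - norm \<eta>) / d"
      have I: "integral UNIV (\<lambda>p. W a c p * Gst \<pi> \<xi> y (fst p) (snd p)) \<le> e1"
      proof -
        have "integral UNIV (\<lambda>p. W a c p * Gst \<pi> \<xi> y (fst p) (snd p))
           \<le> e0 * norm \<xi> + (2 / d) * (norm \<xi> - (norm (piXY \<pi> a c \<xi>) + norm \<xi>) / 2)"
          by (rule ucstep[OF R P d(1)]) (use ny hy in \<open>auto simp: n_def \<eta>_def\<close>)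
        also have "\<dots> = e1" unfolding e1_def n_def \<eta>_def using d by (simp add: field_simps)
        finally show ?thesis .
      qed
      have e1p: "0 < e1" unfolding e1_def using e0 np etan d by (simp add: add_pos_nonneg)
      have e1b: "e1 \<le> 2 * e0 * n"
      proof -
        have "n - norm \<eta> \<le> d * e0 * n" using big unfolding q0_def by (simp add: algebra_simps)
        hence "(n - norm \<eta>) / d \<le> e0 * n" using d by (simp add: field_simps)
        thus ?thesis unfolding e1_def by simp
      qed
      have E1: "(\<integral>\<^sup>+p. ennreal (W a c p * Gst \<pi> \<xi> y (fst p) (snd p)) \<partial>lborel) \<le> ennreal e1"
        unfolding G_nn_eq[OF R] using I by (simp add: ennreal_leI)
      have "ennreal (integral UNIV (\<lambda>u. gauss (a+c) u * hZ \<pi> \<xi> u)) \<le> ennreal (16 * exp 1 * (e1 + 2*e1/kap) / kap)"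
        using core[OF R E1 e1p] unfolding hZ_int_eq[OF R] .
      hence Ib: "integral UNIV (\<lambda>u. gauss (a+c) u * hZ \<pi> \<xi> u) \<le> 16 * exp 1 * (e1 + 2*e1/kap) / kap"
        using e1p kp by (subst (asm) ennreal_le_iff) (auto intro!: divide_nonneg_pos)
      have "16 * exp 1 * (e1 + 2*e1/kap) / kap = 16 * exp 1 * e1 * (kap + 2) / kap^2"
        using kp by (simp add: field_simps power2_eq_square)
      also have "\<dots> \<le> 16 * 3 * (2 * e0 * n) * (kap + 2) / kap^2"
        using e1p e1b kp exp_le by (intro divide_right_mono mult_right_mono mult_mono) auto
      also have "\<dots> = n / 2"
      proof -
        have k2: "kap + 2 \<noteq> 0" "kap^2 \<noteq> 0" using kp by auto
        obtain K where K: "K = kap + 2" "K \<noteq> 0" using k2 by blast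
        have "e0 * K = kap^2 / 192" unfolding e0_def K(1)[symmetric] using K(2) by simp
        hence ek: "e0 * (kap + 2) = kap^2 / 192" using K(1) by simp
        have A: "16 * 3 * (2 * e0 * n) * (kap + 2) = 96 * n * (e0 * (kap + 2))" by (simp add: algebra_simps)
        have "16 * 3 * (2 * e0 * n) * (kap + 2) / kap^2 = 96 * n * (kap^2 / 192) / kap^2"
          unfolding A ek ..
        also have "\<dots> = n / 2" using k2 by simp
        finally show ?thesis .
      qed
      finally have "integral UNIV (\<lambda>u. gauss (a+c) u * hZ \<pi> \<xi> u) \<le> n / 2" using Ib by linarith
      hence "n / 2 \<le> norm (piZ \<pi> (a + c) \<xi>)" using lowerZ[OF R, of \<xi> "a + c"] unfolding n_def by linarith
      hence "norm \<eta> \<le> 2 * norm (piZ \<pi> (a + c) \<xi>)" using etan by linarith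
      thus ?thesis unfolding \<eta>_def by simp
    qed
  qed
qed

end
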